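(* Let $\mathbb F$ be a finite field and let $n,k,r$ be integers with $2\le r<k$. If $\mathcal C$ is an $(n,k,r,3)$-sequential locally repairable code (SLRC) over $\mathbb F$, then $$\frac{k}{n}\le\left(\frac{r}{r+1}\right)^2 .$$
   Context: Let $\mathcal C$ be an $[n,k]$ linear code over a finite field $\mathbb F$, with coordinates indexed by $[n]=\{1,\dots,n\}$. For $i\in[n]$, a set $R\subseteq[n]\setminus\{i\}$ is a recovering set of $i$ if there are nonzero $a_j\in\mathbb F$ ($j\in R$) with $x_i=\sum_{j\in R}a_jx_j$ for every codeword $x=(x_1,\dots,x_n)\in\mathcal C$. For $E\subseteq[n]$, $\mathcal C$ is $(E,r)$-recoverable if $E$ can be indexed as $E=\{i_1,\dots,i_{|E|}\}$ so that each $i_\ell$ has a recovering set $R_\ell\subseteq([n]\setminus E)\cup\{i_1,\dots,i_{\ell-1}\}$ with $|R_\ell|\le r$. $\mathcal C$ is an $(n,k,r,t)$-SLRC if it is $(E,r)$-recoverable for every $E\subseteq[n]$ with $|E|\le t$. *)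

theory Defs
  imports Complex_Main "HOL.Vector_Spaces" "HOL-Library.Function_Algebras"
begin

text \<open>Vectors of length n over a field F are modelled as functions nat => F supported on
  the coordinate set {1..n}.\<close>

definition coords :: "nat \<Rightarrow> nat set" where
  "coords n = {1..n}"

definition ambient :: "nat \<Rightarrow> (nat \<Rightarrow> 'a::field) set" where
  "ambient n = {x. \<forall>i. i \<notin> coords n \<longrightarrow> x i = 0}"

definition fscale :: "'a::field \<Rightarrow> (nat \<Rightarrow> 'a) \<Rightarrow> (nat \<Rightarrow> 'a)" where
  "fscale c x = (\<lambda>i. c * x i)"

definition linear_code :: "nat \<Rightarrow> nat \<Rightarrow> (nat \<Rightarrow> 'a::field) set \<Rightarrow> bool" where
  "linear_code n k C \<longleftrightarrow>
     C \<subseteq> ambient n \<and> 0 \<in> C \<and>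
     (\<forall>x\<in>C. \<forall>y\<in>C. x + y \<in> C) \<and>
     (\<forall>c. \<forall>x\<in>C. fscale c x \<in> C) \<and>
     vector_space.dim fscale C = k"

definition recovering_set ::
  "nat \<Rightarrow> (nat \<Rightarrow> 'a::field) set \<Rightarrow> nat \<Rightarrow> nat set \<Rightarrow> bool" where
  "recovering_set n C i R \<longleftrightarrow>
     R \<subseteq> coords n - {i} \<and>
     (\<exists>a. (\<forall>j\<in>R. a j \<noteq> 0) \<and> (\<forall>x\<in>C. x i = (\<Sum>j\<in>R. a j * x j)))"

definition E_r_recoverable ::
  "nat \<Rightarrow> (nat \<Rightarrow> 'a::field) set \<Rightarrow> nat set \<Rightarrow> nat \<Rightarrow> bool" where
  "E_r_recoverable n C E r \<longleftrightarrow>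
     (\<exists>es. distinct es \<and> set es = E \<and>
        (\<forall>l < length es. \<exists>R. recovering_set n C (es ! l) R \<and>
              R \<subseteq> (coords n - E) \<union> set (take l es) \<and> card R \<le> r))"

definition SLRC ::
  "nat \<Rightarrow> nat \<Rightarrow> nat \<Rightarrow> nat \<Rightarrow> (nat \<Rightarrow> 'a::field) set \<Rightarrow> bool" where
  "SLRC n k r t C \<longleftrightarrow> linear_code n k C \<and>
     (\<forall>E. E \<subseteq> coords n \<and> card E \<le> t \<longrightarrow> E_r_recoverable n C E r)"

end

theory Submission imports Defs begin

interpretation fs: vector_space "fscale :: 'a::field \<Rightarrow> (nat \<Rightarrow> 'a) \<Rightarrow> _"
  by unfold_locales (auto simp: fscale_def fun_eq_iff algebra_simps)

interpretation fsp: vector_space_pair "fscale :: 'a::field \<Rightarrow> (nat \<Rightarrow> 'a) \<Rightarrow> _" "fscale :: 'a::field \<Rightarrow> (nat \<Rightarrow> 'a) \<Rightarrow> _"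
  by unfold_locales

lemma sum_fun_apply: "(\<Sum>v\<in>B. f v) (j::'b) = (\<Sum>v\<in>B. f v j)"
  by (induction B rule: infinite_finite_induct) auto

lemma finite_coords[simp]: "finite (coords n)"
  by (simp add: coords_def)

lemma card_coords[simp]: "card (coords n) = n"
  by (simp add: coords_def)

definition ipr :: "nat \<Rightarrow> (nat \<Rightarrow> 'a::field) \<Rightarrow> (nat \<Rightarrow> 'a) \<Rightarrow> 'a" where
  "ipr n h x = (\<Sum>j\<in>coords n. h j * x j)"

definition checks :: "nat \<Rightarrow> nat \<Rightarrow> (nat \<Rightarrow> 'a::field) set \<Rightarrow> (nat \<Rightarrow> 'a) set" where
  "checks n r C = {h \<in> ambient n. card {j\<in>coords n. h j \<noteq> 0} \<le> r+1 \<and> (\<forall>x\<in>C. ipr n h x = 0)}"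

definition ev :: "nat \<Rightarrow> nat \<Rightarrow> 'a::field" where
  "ev j = (\<lambda>i. if i = j then 1 else 0)"

lemma first_check:
  fixes C :: "(nat \<Rightarrow> 'a::field) set"
  assumes "E_r_recoverable n C E r" "E \<noteq> {}" "E \<subseteq> coords n"
  shows "\<exists>e\<in>E. \<exists>h\<in>checks n r C. h e \<noteq> 0 \<and> (\<forall>e'\<in>E. e' \<noteq> e \<longrightarrow> h e' = 0)"
proof -
  obtain es where es: "distinct es" "set es = E"
    "\<forall>l < length es. \<exists>R. recovering_set n C (es ! l) R \<and>
              R \<subseteq> (coords n - E) \<union> set (take l es) \<and> card R \<le> r"
    using assms(1) unfolding E_r_recoverable_def by blast
  have "es \<noteq> []" using es(2) assms(2) by auto
  then obtain R where R: "recovering_set n C (es ! 0) R" "R \<subseteq> coords n - E" "card R \<le> r"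
    using es(3) by fastforce
  define i where "i = es ! 0"
  have iE: "i \<in> E" using \<open>es \<noteq> []\<close> es(2) i_def by auto
  hence ic: "i \<in> coords n" using assms(3) by auto
  obtain a where a: "R \<subseteq> coords n - {i}" "\<forall>j\<in>R. a j \<noteq> 0"
    "\<forall>x\<in>C. x i = (\<Sum>j\<in>R. a j * x j)"
    using R(1) unfolding recovering_set_def i_def by blast
  define h where "h = (\<lambda>j. if j = i then 1 else if j \<in> R then - a j else (0::'a))"
  have finR: "finite R" using a(1) by (meson finite_Diff finite_coords finite_subset)
  have iR: "i \<notin> R" using a(1) by auto
  have amb: "h \<in> ambient n" using a(1) ic by (auto simp: ambient_def h_def)
  have "{j\<in>coords n. h j \<noteq> 0} \<subseteq> insert i R" by (auto simp: h_def)
  hence "card {j\<in>coords n. h j \<noteq> 0} \<le> card (insert i R)"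
    using finR by (intro card_mono) auto
  also have "\<dots> \<le> r + 1" using finR R(3) by (simp add: card_insert_if)
  finally have cardh: "card {j\<in>coords n. h j \<noteq> 0} \<le> r + 1" .
  have ip: "ipr n h x = 0" if "x \<in> C" for x
  proof -
    have "ipr n h x = (\<Sum>j\<in>insert i R. h j * x j)"
      unfolding ipr_def using a(1) ic by (intro sum.mono_neutral_right) (auto simp: h_def)
    also have "\<dots> = h i * x i + (\<Sum>j\<in>R. h j * x j)" using finR iR by simp
    also have "(\<Sum>j\<in>R. h j * x j) = (\<Sum>j\<in>R. - (a j * x j))"
      using iR by (intro sum.cong) (auto simp: h_def)
    also have "\<dots> = - x i" using a(3) that by (simp add: sum_negf)
    finally show ?thesis by (simp add: h_def)
  qed
  have "h \<in> checks n r C" using amb cardh ip by (auto simp: checks_def)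
  moreover have "h i \<noteq> 0" by (simp add: h_def)
  moreover have "\<forall>e'\<in>E. e' \<noteq> i \<longrightarrow> h e' = 0" using R(2) by (auto simp: h_def)
  ultimately show ?thesis using iE by blast
qed

lemma span_coord:
  fixes B :: "(nat \<Rightarrow> 'a::field) set"
  assumes "finite B" "h \<in> fs.span B"
  shows "\<exists>u. \<forall>j. h j = (\<Sum>b\<in>B. u b * b j)"
proof -
  obtain u where "h = (\<Sum>v\<in>B. fscale (u v) v)"
    using assms fs.span_finite by blast
  thus ?thesis by (auto simp: sum_fun_apply fscale_def)
qed

lemma sum_single:
  fixes B :: "(nat \<Rightarrow> 'a::field) set"
  assumes "finite B" "{b\<in>B. b x \<noteq> 0} = {b0}"
  shows "(\<Sum>b\<in>B. u b * b x) = u b0 * b0 x"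
proof -
  have "(\<Sum>b\<in>B. u b * b x) = (\<Sum>b\<in>{b0}. u b * b x)"
    using assms by (intro sum.mono_neutral_right) auto
  thus ?thesis by simp
qed

lemma sum_double:
  fixes B :: "(nat \<Rightarrow> 'a::field) set"
  assumes "finite B" "{b\<in>B. b x \<noteq> 0} = {b1,b2}" "b1 \<noteq> b2"
  shows "(\<Sum>b\<in>B. u b * b x) = u b1 * b1 x + u b2 * b2 x"
proof -
  have "(\<Sum>b\<in>B. u b * b x) = (\<Sum>b\<in>{b1,b2}. u b * b x)"
    using assms by (intro sum.mono_neutral_right) auto
  thus ?thesis using assms(3) by simp
qed

locale comb =
  fixes B :: "(nat \<Rightarrow> 'a::field) set" and n r :: nat
  assumes finB: "finite B"
    and rowcard: "\<And>b. b \<in> B \<Longrightarrow> card {j\<in>coords n. b j \<noteq> 0} \<le> r + 1"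
    and r1: "1 \<le> r"
    and Q: "\<And>E. E \<subseteq> coords n \<Longrightarrow> card E \<le> 3 \<Longrightarrow> E \<noteq> {} \<Longrightarrow>
       \<exists>e\<in>E. \<exists>u. (\<Sum>b\<in>B. u b * b e) \<noteq> 0 \<and> (\<forall>e'\<in>E. e' \<noteq> e \<longrightarrow> (\<Sum>b\<in>B. u b * b e') = 0)"
begin

definition S where "S i = {b\<in>B. b i \<noteq> 0}"
definition W1 where "W1 = {i\<in>coords n. card (S i) = 1}"
definition R1 where "R1 = {b\<in>B. \<exists>i\<in>W1. b i \<noteq> 0}"
definition \<omega> where "\<omega> i b = r + (if b \<in> R1 then 0 else 1) + (if i \<in> W1 then r + 1 else 0)"

lemma finS: "finite (S i)" using finB by (simp add: S_def)

lemma cover: assumes "i \<in> coords n" shows "S i \<noteq> {}"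
proof
  assume "S i = {}"
  from Q[of "{i}"] assms obtain u where "(\<Sum>b\<in>B. u b * b i) \<noteq> 0" by auto
  moreover have "(\<Sum>b\<in>B. u b * b i) = 0" using \<open>S i = {}\<close> by (intro sum.neutral) (auto simp: S_def)
  ultimately show False by simp
qed

lemma W1_S: assumes "i \<in> W1" "b \<in> B" "b i \<noteq> 0" shows "S i = {b}"
proof -
  have "card (S i) = 1" using assms by (simp add: W1_def)
  then obtain c where "S i = {c}" by (auto simp: card_Suc_eq)
  moreover have "b \<in> S i" using assms by (simp add: S_def)
  ultimately show ?thesis by auto
qed

lemma W1_unique:
  assumes "i \<in> W1" "i' \<in> W1" "b \<in> B" "b i \<noteq> 0" "b i' \<noteq> 0"
  shows "i = i'"
proof (rule ccontr)
  assume ne: "i \<noteq> i'"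
  have Si: "S i = {b}" and Si': "S i' = {b}" using W1_S assms by auto
  have sub: "{i, i'} \<subseteq> coords n" using assms by (auto simp: W1_def)
  have c2: "card {i, i'} \<le> 3" by (simp add: card_insert_if)
  obtain e u where e: "e \<in> {i,i'}" "(\<Sum>b\<in>B. u b * b e) \<noteq> 0"
     "\<forall>e'\<in>{i,i'}. e' \<noteq> e \<longrightarrow> (\<Sum>b\<in>B. u b * b e') = 0"
    using Q[OF sub c2] by blast
  have hi: "(\<Sum>b\<in>B. u b * b i) = u b * b i" using sum_single[OF finB] Si by (simp add: S_def)
  have hi': "(\<Sum>b\<in>B. u b * b i') = u b * b i'" using sum_single[OF finB] Si' by (simp add: S_def)
  show False using e hi hi' ne assms(4,5) by auto
qed

lemma two_case:
  assumes "i \<in> coords n" "card (S i) = 2"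
  shows "\<exists>b\<in>S i. b \<notin> R1"
proof (rule ccontr)
  assume "\<not> ?thesis"
  hence allR: "\<forall>b\<in>S i. b \<in> R1" by auto
  obtain b1 b2 where Sb: "S i = {b1,b2}" "b1 \<noteq> b2" using assms(2) by (auto simp: card_Suc_eq numeral_2_eq_2)
  have "b1 \<in> R1" "b2 \<in> R1" using allR Sb by auto
  then obtain j1 j2 where j: "j1 \<in> W1" "b1 j1 \<noteq> 0" "j2 \<in> W1" "b2 j2 \<noteq> 0" "b1 \<in> B" "b2 \<in> B"
    by (auto simp: R1_def)
  have S1: "S j1 = {b1}" and S2: "S j2 = {b2}" using W1_S j by auto
  have iW: "i \<notin> W1" using assms by (simp add: W1_def)
  have d: "j1 \<noteq> i" "j2 \<noteq> i" "j1 \<noteq> j2" using j iW S1 S2 Sb by auto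
  have sub: "{j1, i, j2} \<subseteq> coords n" using assms j by (auto simp: W1_def)
  have c3: "card {j1, i, j2} \<le> 3" by (simp add: card_insert_if)
  obtain e u where e: "e \<in> {j1,i,j2}" "(\<Sum>b\<in>B. u b * b e) \<noteq> 0"
     "\<forall>e'\<in>{j1,i,j2}. e' \<noteq> e \<longrightarrow> (\<Sum>b\<in>B. u b * b e') = 0"
    using Q[OF sub c3] by blast
  have h1: "(\<Sum>b\<in>B. u b * b j1) = u b1 * b1 j1" using sum_single[OF finB] S1 by (simp add: S_def)
  have h2: "(\<Sum>b\<in>B. u b * b j2) = u b2 * b2 j2" using sum_single[OF finB] S2 by (simp add: S_def)
  have hi: "(\<Sum>b\<in>B. u b * b i) = u b1 * b1 i + u b2 * b2 i" using sum_double[OF finB] Sb by (simp add: S_def)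
  have bi: "b1 i \<noteq> 0" "b2 i \<noteq> 0" using Sb by (auto simp: S_def)
  show False
  proof -
    { assume "e = j1"
      hence "u b1 \<noteq> 0" "u b2 = 0" "u b1 * b1 i + u b2 * b2 i = 0" using e h1 h2 hi d j by auto
      hence False using bi by auto }
    moreover
    { assume "e = j2"
      hence "u b2 \<noteq> 0" "u b1 = 0" "u b1 * b1 i + u b2 * b2 i = 0" using e h1 h2 hi d j by auto
      hence False using bi by auto }
    moreover
    { assume "e = i"
      hence "u b2 = 0" "u b1 = 0" "u b1 * b1 i + u b2 * b2 i \<noteq> 0" using e h1 h2 hi d j by auto
      hence False by auto }
    ultimately show False using e(1) by blast
  qed
qed

lemma col_bound:
  assumes "i \<in> coords n"
  shows "2 * r + 1 \<le> (\<Sum>b\<in>S i. \<omega> i b)"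
proof -
  have ge: "\<And>b. r \<le> \<omega> i b" by (simp add: \<omega>_def)
  have cpos: "card (S i) \<noteq> 0" using cover[OF assms] finS by auto
  consider "card (S i) = 1" | "card (S i) = 2" | "card (S i) \<ge> 3" using cpos by linarith
  thus ?thesis
  proof cases
    case 1
    then obtain b where Sb: "S i = {b}" by (auto simp: card_Suc_eq)
    have "i \<in> W1" using 1 assms by (simp add: W1_def)
    thus ?thesis using Sb by (simp add: \<omega>_def)
  next
    case 2
    then obtain b0 where b0: "b0 \<in> S i" "b0 \<notin> R1" using two_case assms by blast
    have "(\<Sum>b\<in>S i. \<omega> i b) = \<omega> i b0 + (\<Sum>b\<in>S i - {b0}. \<omega> i b)"
      using b0 finS by (simp add: sum.remove)
    moreover have "\<omega> i b0 \<ge> r + 1" using b0 by (simp add: \<omega>_def)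
    moreover have "card (S i - {b0}) * r \<le> (\<Sum>b\<in>S i - {b0}. \<omega> i b)"
      using ge sum_bounded_below[of "S i - {b0}" r "\<omega> i"] by (simp add: mult.commute)
    moreover have "card (S i - {b0}) = 1" using 2 b0 finS by simp
    ultimately have "r \<le> (\<Sum>b\<in>S i - {b0}. \<omega> i b)" by simp
    thus ?thesis using \<open>(\<Sum>b\<in>S i. \<omega> i b) = \<omega> i b0 + (\<Sum>b\<in>S i - {b0}. \<omega> i b)\<close>
       \<open>\<omega> i b0 \<ge> r + 1\<close> by linarith
  next
    case 3
    have "card (S i) * r \<le> (\<Sum>b\<in>S i. \<omega> i b)"
      using ge sum_bounded_below[of "S i" r "\<omega> i"] by (simp add: mult.commute)
    moreover have "3 * r \<le> card (S i) * r" using 3 by simp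
    ultimately show ?thesis using r1 by linarith
  qed
qed

lemma row_bound:
  assumes "b \<in> B"
  shows "(\<Sum>i\<in>{j\<in>coords n. b j \<noteq> 0}. \<omega> i b) \<le> (r + 1)^2"
proof -
  define T where "T = {j\<in>coords n. b j \<noteq> 0}"
  have finT: "finite T" by (simp add: T_def)
  have cT: "card T \<le> r + 1" using rowcard assms by (simp add: T_def)
  show ?thesis
  proof (cases "b \<in> R1")
    case True
    have c1: "card (T \<inter> W1) \<le> 1"
      using W1_unique[OF _ _ assms] by (auto simp: T_def card_le_Suc0_iff_eq)
    hence c2: "(r + 1) * card (T \<inter> W1) \<le> r + 1" using mult_le_mono2[of "card (T \<inter> W1)" 1 "r+1"] by simp
    have c3: "card T * r \<le> (r+1) * r" using cT by (rule mult_le_mono1)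
    have "(\<Sum>i\<in>T. \<omega> i b) = (\<Sum>i\<in>T. r + (if i \<in> W1 then r + 1 else 0))"
      using True by (simp add: \<omega>_def)
    also have "\<dots> = card T * r + (\<Sum>i\<in>T. (if i \<in> W1 then r + 1 else 0))"
      by (simp add: sum.distrib)
    also have "(\<Sum>i\<in>T. (if i \<in> W1 then r + 1 else 0)) = (r + 1) * card (T \<inter> W1)"
      using finT by (simp add: sum.If_cases)
    also have "card T * r + (r + 1) * card (T \<inter> W1) \<le> (r+1) * r + (r + 1)"
      using c2 c3 by linarith
    finally show ?thesis by (simp add: T_def power2_eq_square algebra_simps)
  next
    case False
    have "\<forall>i\<in>T. i \<notin> W1" using False assms by (auto simp: R1_def T_def)
    hence "(\<Sum>i\<in>T. \<omega> i b) = (\<Sum>i\<in>T. r + 1)"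
      using False by (intro sum.cong) (auto simp: \<omega>_def)
    also have "\<dots> = card T * (r + 1)" by simp
    also have "\<dots> \<le> (r + 1) * (r + 1)" using cT by (rule mult_le_mono1)
    finally show ?thesis by (simp add: T_def power2_eq_square)
  qed
qed

lemma count: "(2 * r + 1) * n \<le> (r + 1)^2 * card B"
proof -
  have "(2 * r + 1) * n = (\<Sum>i\<in>coords n. 2 * r + 1)" by simp
  also have "\<dots> \<le> (\<Sum>i\<in>coords n. \<Sum>b\<in>S i. \<omega> i b)"
    by (intro sum_mono col_bound)
  also have "\<dots> = (\<Sum>i\<in>coords n. \<Sum>b\<in>B. if b i \<noteq> 0 then \<omega> i b else 0)"
    unfolding S_def by (rule sum.cong[OF refl]) (simp only: sum.inter_filter[OF finB])
  also have "\<dots> = (\<Sum>b\<in>B. \<Sum>i\<in>coords n. if b i \<noteq> 0 then \<omega> i b else 0)"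
    by (rule sum.swap)
  also have "\<dots> = (\<Sum>b\<in>B. \<Sum>i\<in>{j\<in>coords n. b j \<noteq> 0}. \<omega> i b)"
    by (rule sum.cong[OF refl]) (simp only: sum.inter_filter[OF finite_coords])
  also have "\<dots> \<le> (\<Sum>b\<in>B. (r + 1)^2)"
    by (intro sum_mono row_bound)
  also have "\<dots> = (r + 1)^2 * card B" by simp
  finally show ?thesis .
qed

end

lemma ev_ambient_span:
  assumes "x \<in> ambient n" "P \<subseteq> coords n" "\<forall>i. i \<notin> P \<longrightarrow> x i = (0::'a::field)"
  shows "x \<in> fs.span (ev ` P)"
proof -
  have finP: "finite P" by (rule finite_subset[OF assms(2)]) simp
  have eq: "x = (\<Sum>p\<in>P. fscale (x p) (ev p))"
  proof (rule ext)
    fix i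
    have "(\<Sum>p\<in>P. fscale (x p) (ev p)) i = (\<Sum>p\<in>P. fscale (x p) (ev p) i)" by (rule sum_fun_apply)
    also have "\<dots> = (\<Sum>p\<in>P. if p = i then x p else 0)"
      by (rule sum.cong) (auto simp: fscale_def ev_def)
    also have "\<dots> = (if i \<in> P then x i else 0)" using finP by (simp add: sum.delta)
    also have "\<dots> = x i" using assms(3) by auto
    finally show "x i = (\<Sum>p\<in>P. fscale (x p) (ev p)) i" by (rule sym)
  qed
  have "(\<Sum>p\<in>P. fscale (x p) (ev p)) \<in> fs.span (ev ` P)"
    by (rule fs.span_sum) (simp add: fs.span_scale fs.span_base)
  thus ?thesis by (simp only: eq[symmetric])
qed
lemma ambient_span:
  assumes "x \<in> ambient n"
  shows "x \<in> fs.span (ev ` coords n :: (nat \<Rightarrow> 'a::field) set)"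
  using assms by (intro ev_ambient_span) (auto simp: ambient_def)

lemma ipr_ev:
  assumes "p \<in> coords n" shows "ipr n (ev p) z = z p"
proof -
  have "ipr n (ev p) z = (\<Sum>j\<in>coords n. if j = p then z j else 0)"
    unfolding ipr_def ev_def by (intro sum.cong) auto
  also have "\<dots> = z p" using assms by (simp add: sum.delta')
  finally show ?thesis .
qed

lemma ipr_add: "ipr n (x + y) z = ipr n x z + ipr n y z"
  by (simp add: ipr_def distrib_right sum.distrib)

lemma ipr_scale: "ipr n (fscale c x) z = c * ipr n x z"
  by (simp add: ipr_def fscale_def sum_distrib_left mult.assoc)

lemma ipr_zero: "ipr n 0 z = 0"
  by (simp add: ipr_def)

lemma dim_bound:
  fixes C :: "(nat \<Rightarrow> 'a::field) set"
  assumes lin: "linear_code n k C" and B: "B \<subseteq> checks n r C" "fs.independent B"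
  shows "k + card B \<le> n"
proof -
  define E where "E = (ev ` coords n :: (nat \<Rightarrow> 'a) set)"
  have finE: "finite E" and cardE: "card E \<le> n" using card_image_le[of "coords n" ev] by (auto simp: E_def)
  have Bamb: "B \<subseteq> ambient n" using B(1) by (auto simp: checks_def)
  have EspE: "E \<subseteq> fs.span E" by (rule fs.span_superset)
  have BspE: "B \<subseteq> fs.span E" using Bamb ambient_span by (auto simp: E_def)
  obtain B' where B': "B \<subseteq> B'" "B' \<subseteq> B \<union> E" "fs.independent B'" "B \<union> E \<subseteq> fs.span B'"
    using fs.maximal_independent_subset_extend[of B "B \<union> E"] B(2) by blast
  have "B' \<subseteq> fs.span E" using B'(2) EspE BspE by auto
  hence finB': "finite B'" and cB': "card B' \<le> card E" using fs.independent_span_bound[OF finE B'(3)] by auto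
  define P where "P = {j\<in>coords n. ev j \<in> B' - B}"
  have injev: "inj (ev :: nat \<Rightarrow> nat \<Rightarrow> 'a)"
    by (rule injI) (auto simp: ev_def fun_eq_iff split: if_splits)
  have B'B: "B' - B = ev ` P" using B'(2) by (auto simp: P_def E_def)
  have finP: "finite P" by (simp add: P_def)
  have "card B' = card B + card (B' - B)"
    using B'(1) finB' by (metis card_Diff_subset card_mono finite_subset le_add_diff_inverse)
  moreover have "card (B' - B) = card P" using B'B injev by (simp add: card_image inj_on_subset)
  ultimately have cBP: "card B + card P \<le> n" using cB' cardE by linarith
  have Camb: "C \<subseteq> ambient n" and C0: "0 \<in> C" and Cadd: "\<And>x y. x \<in> C \<Longrightarrow> y \<in> C \<Longrightarrow> x + y \<in> C"
    and Cscale: "\<And>c x. x \<in> C \<Longrightarrow> fscale c x \<in> C" and dimC: "fs.dim C = k"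
    using lin by (auto simp: linear_code_def)
  have subC: "fs.subspace C" using C0 Cadd Cscale by (auto simp: fs.subspace_def)
  have kernel: "z = 0" if z: "z \<in> C" "\<forall>p\<in>P. z p = 0" for z
  proof -
    have sub: "fs.subspace (Collect (\<lambda>v. ipr n v z = 0))"
      unfolding fs.subspace_def by (simp add: ipr_add ipr_scale ipr_zero)
    have onB': "ipr n v z = 0" if "v \<in> B'" for v
    proof (cases "v \<in> B")
      case True thus ?thesis using B(1) z(1) by (auto simp: checks_def)
    next
      case False
      hence "v \<in> B' - B" using that by simp
      hence "v \<in> ev ` P" using B'B by simp
      then obtain p where "p \<in> P" "v = ev p" by (rule imageE) simp
      thus ?thesis using z(2) ipr_ev[of p n z] by (auto simp: P_def)
    qed
    have "z j = 0" for j
    proof (cases "j \<in> coords n")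
      case True
      hence "ev j \<in> E" by (simp add: E_def)
      hence evj: "ev j \<in> fs.span B'" using B'(4) by (meson UnI2 subsetD)
      have "ipr n (ev j) z = 0"
        by (rule fs.span_induct[where P="\<lambda>v. ipr n v z = 0", OF evj sub]) (rule onB')
      thus ?thesis using ipr_ev[OF True, of z] by simp
    next
      case False thus ?thesis using z(1) Camb by (auto simp: ambient_def)
    qed
    thus ?thesis by (simp add: fun_eq_iff)
  qed
  define proj where "proj x = (\<lambda>i. if i \<in> P then x i else (0::'a))" for x :: "nat \<Rightarrow> 'a"
  have linproj: "Vector_Spaces.linear fscale fscale proj"
  proof -
    have "\<forall>x y. proj (x + y) = proj x + proj y" by (simp add: proj_def fun_eq_iff)
    moreover have "\<forall>c x. proj (fscale c x) = fscale c (proj x)" by (simp add: proj_def fscale_def fun_eq_iff)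
    ultimately show ?thesis unfolding Vector_Spaces.linear_iff using fs.vector_space_axioms by blast
  qed
  have injC: "inj_on proj C"
  proof (rule inj_onI)
    fix x y assume xy: "x \<in> C" "y \<in> C" "proj x = proj y"
    have zC: "x + fscale (-1) y \<in> C" using xy Cadd Cscale by blast
    have "\<forall>p\<in>P. (x + fscale (-1) y) p = 0" using xy(3)
      by (auto simp: proj_def fscale_def fun_eq_iff split: if_splits)
    hence "x + fscale (-1) y = 0" using kernel zC by blast
    thus "x = y" by (auto simp: fun_eq_iff fscale_def)
  qed
  obtain D where D: "D \<subseteq> C" "fs.independent D" "C \<subseteq> fs.span D" "card D = fs.dim C"
    using fs.basis_exists by blast
  have "fs.span D \<subseteq> C" by (rule fs.span_minimal[OF D(1) subC])
  hence injD: "inj_on proj (fs.span D)" by (rule inj_on_subset[OF injC])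
  have indD: "fs.independent (proj ` D)"
    using fsp.linear_independent_injective_image[OF linproj D(2) injD] .
  have "proj ` D \<subseteq> fs.span (ev ` P)"
  proof
    fix y assume "y \<in> proj ` D"
    then obtain x where "x \<in> D" "y = proj x" by blast
    moreover have "proj x \<in> ambient n" using \<open>x \<in> D\<close> D(1) Camb by (auto simp: proj_def ambient_def P_def)
    ultimately show "y \<in> fs.span (ev ` P)"
      by (intro ev_ambient_span[of y n P]) (auto simp: proj_def P_def)
  qed
  hence "card (proj ` D) \<le> card (ev ` P :: (nat \<Rightarrow> 'a) set)"
    using fs.independent_span_bound[OF finite_imageI[OF finP] indD] by simp
  also have "card (ev ` P :: (nat \<Rightarrow> 'a) set) \<le> card P" by (rule card_image_le[OF finP])
  finally have "card (proj ` D) \<le> card P" .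
  moreover have "card (proj ` D) = card D" using injC D(1) by (simp add: card_image inj_on_subset)
  ultimately have "k \<le> card P" using D(4) dimC by simp
  thus ?thesis using cBP by linarith
qed

theorem theorem1:
  fixes C :: "(nat \<Rightarrow> 'a::{field,finite}) set" and n k r :: nat
  assumes "2 \<le> r" and "r < k"
    and "SLRC n k r 3 C"
  shows "real k / real n \<le> (real r / (real r + 1)) ^ 2"
proof -
  have lin: "linear_code n k C" and rec: "\<And>E. E \<subseteq> coords n \<Longrightarrow> card E \<le> 3 \<Longrightarrow> E_r_recoverable n C E r"
    using assms(3) by (auto simp: SLRC_def)
  obtain B where B: "B \<subseteq> checks n r C" "fs.independent B" "checks n r C \<subseteq> fs.span B"
    using fs.maximal_independent_subset[of "checks n r C"] by blast
  have Bamb: "B \<subseteq> ambient n" using B(1) by (auto simp: checks_def)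
  have "B \<subseteq> fs.span (ev ` coords n)" using Bamb ambient_span by blast
  hence finB: "finite B"
    using fs.independent_span_bound[OF finite_imageI[OF finite_coords] B(2)] by simp
  have "comb B n r"
  proof
    show "finite B" by fact
    show "\<And>b. b \<in> B \<Longrightarrow> card {j \<in> coords n. b j \<noteq> 0} \<le> r + 1" using B(1) by (auto simp: checks_def)
    show "1 \<le> r" using assms(1) by simp
    fix E assume E: "E \<subseteq> coords n" "card E \<le> 3" "E \<noteq> {}"
    obtain e h where eh: "e \<in> E" "h \<in> checks n r C" "h e \<noteq> 0" "\<forall>e'\<in>E. e' \<noteq> e \<longrightarrow> h e' = 0"
      using first_check[OF rec[OF E(1,2)] E(3) E(1)] by blast
    obtain u where u: "\<forall>j. h j = (\<Sum>b\<in>B. u b * b j)"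
      using span_coord[OF finB] eh(2) B(3) by blast
    show "\<exists>e\<in>E. \<exists>u. (\<Sum>b\<in>B. u b * b e) \<noteq> 0 \<and> (\<forall>e'\<in>E. e' \<noteq> e \<longrightarrow> (\<Sum>b\<in>B. u b * b e') = 0)"
      using eh u by metis
  qed
  hence cnt: "(2 * r + 1) * n \<le> (r + 1)^2 * card B" by (rule comb.count)
  have dimb: "k + card B \<le> n" by (rule dim_bound[OF lin B(1,2)])
  have key: "k * (r + 1)^2 \<le> r^2 * n"
  proof -
    have "k * (r+1)^2 + card B * (r+1)^2 \<le> n * (r+1)^2"
      using mult_le_mono1[OF dimb, of "(r+1)^2"] by (simp add: algebra_simps)
    moreover have "n * (r+1)^2 = r^2 * n + (2 * r + 1) * n" by (simp add: power2_eq_square algebra_simps)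
    ultimately show ?thesis using cnt by (simp add: mult.commute)
  qed
  hence keyr: "real k * (real r + 1)^2 \<le> real r ^ 2 * real n"
    by (metis (mono_tags, lifting) of_nat_1 of_nat_add of_nat_le_iff of_nat_mult of_nat_power)
  show ?thesis
  proof (cases "n = 0")
    case True thus ?thesis by simp
  next
    case False
    hence np: "real n > 0" by simp
    have "real k / real n \<le> real r ^ 2 / (real r + 1)^2"
      using keyr np by (simp add: divide_le_eq field_simps)
    thus ?thesis by (simp add: power_divide)
  qed
qed

end
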